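(* For $n\ge1$, $\left| \Pi_n \wr C_2 (1^11^1, 1^11^2, 1^21^1, 1^12^2)\right|=n+1$.
   Context: For $n\ge0$ let $[n]=\{1,\dots,n\}$. A $2$-colored set partition of $[n]$ is a set partition of $[n]$ together with an assignment of a color from $\{1,2\}$ to each element; $\Pi_n\wr C_2$ is the set of these. For a set $S$ of patterns, $\Pi_n\wr C_2(S)$ is the set of such colored partitions avoiding every pattern in $S$ in the pattern sense. For the patterns used here: $\sigma$ contains $1^11^1$ iff two elements in the same block have the same color; $1^11^2$ iff there are $i<j$ in the same block with $i$ colored $1$ and $j$ colored $2$; $1^21^1$ iff there are $i<j$ in the same block with $i$ colored $2$ and $j$ colored $1$; $1^12^2$ iff there are $i<j$ in different blocks with $i$ colored $1$ and $j$ colored $2$. *)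

theory Defs
  imports Main "HOL-Library.FuncSet" "HOL-Library.Disjoint_Sets"
begin

definition colored_partitions :: "nat \<Rightarrow> (nat set set \<times> (nat \<Rightarrow> nat)) set" where
  "colored_partitions n =
     {(P, c). partition_on {1..n} P \<and> c \<in> {1..n} \<rightarrow>\<^sub>E {1, 2}}"

definition same_block :: "nat set set \<Rightarrow> nat \<Rightarrow> nat \<Rightarrow> bool" where
  "same_block P i j \<longleftrightarrow> (\<exists>B\<in>P. i \<in> B \<and> j \<in> B)"

definition contains_p11_11 :: "nat set set \<times> (nat \<Rightarrow> nat) \<Rightarrow> bool" where
  "contains_p11_11 \<sigma> \<longleftrightarrow>
     (\<exists>i j. i < j \<and> same_block (fst \<sigma>) i j \<and> snd \<sigma> i = snd \<sigma> j)"

definition contains_p11_12 :: "nat set set \<times> (nat \<Rightarrow> nat) \<Rightarrow> bool" where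
  "contains_p11_12 \<sigma> \<longleftrightarrow>
     (\<exists>i j. i < j \<and> same_block (fst \<sigma>) i j \<and> snd \<sigma> i = 1 \<and> snd \<sigma> j = 2)"

definition contains_p12_11 :: "nat set set \<times> (nat \<Rightarrow> nat) \<Rightarrow> bool" where
  "contains_p12_11 \<sigma> \<longleftrightarrow>
     (\<exists>i j. i < j \<and> same_block (fst \<sigma>) i j \<and> snd \<sigma> i = 2 \<and> snd \<sigma> j = 1)"

definition contains_p11_22 :: "nat set set \<times> (nat \<Rightarrow> nat) \<Rightarrow> bool" where
  "contains_p11_22 \<sigma> \<longleftrightarrow>
     (\<exists>i j. i < j \<and> i \<in> \<Union>(fst \<sigma>) \<and> j \<in> \<Union>(fst \<sigma>) \<and>
            \<not> same_block (fst \<sigma>) i j \<and> snd \<sigma> i = 1 \<and> snd \<sigma> j = 2)"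

end

theory Submission
  imports Defs
begin

definition SP :: "nat \<Rightarrow> nat set set" where "SP n = (\<lambda>i. {i}) ` {1..n}"
definition FC :: "nat \<Rightarrow> nat \<Rightarrow> nat \<Rightarrow> nat" where
  "FC n k = (\<lambda>i. if i \<in> {1..n} then (if i \<le> k then 2 else 1) else undefined)"

lemma SP_part: "partition_on {1..n} (SP n)"
  unfolding partition_on_def SP_def disjoint_def by auto

lemma same_block_SP: "same_block (SP n) i j \<Longrightarrow> i = j"
  unfolding same_block_def SP_def by auto

lemma set_eq:
  "{\<sigma> \<in> colored_partitions n.
            \<not> contains_p11_11 \<sigma> \<and> \<not> contains_p11_12 \<sigma> \<and>
            \<not> contains_p12_11 \<sigma> \<and> \<not> contains_p11_22 \<sigma>} = (\<lambda>k. (SP n, FC n k)) ` {0..n}"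
  (is "?L = ?R")
proof
  show "?R \<subseteq> ?L"
  proof
    fix x assume "x \<in> ?R"
    then obtain k where k: "k \<le> n" "x = (SP n, FC n k)" by auto
    have "x \<in> colored_partitions n"
      using k SP_part unfolding colored_partitions_def FC_def by (auto simp: PiE_def extensional_def)
    moreover have "\<not> contains_p11_11 x \<and> \<not> contains_p11_12 x \<and> \<not> contains_p12_11 x"
      using k same_block_SP unfolding contains_p11_11_def contains_p11_12_def contains_p12_11_def
      by fastforce
    moreover have "\<not> contains_p11_22 x"
      using k unfolding contains_p11_22_def FC_def SP_def by (auto split: if_splits)
    ultimately show "x \<in> ?L" by auto
  qed
next
  show "?L \<subseteq> ?R"
  proof
    fix x assume x: "x \<in> ?L"
    obtain P c where xPc: "x = (P, c)" by fastforce
    have part: "partition_on {1..n} P" and cf: "c \<in> {1..n} \<rightarrow>\<^sub>E {1, 2}"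
      using x xPc unfolding colored_partitions_def by auto
    have n1: "\<not> contains_p11_11 (P,c)" "\<not> contains_p11_12 (P,c)" "\<not> contains_p12_11 (P,c)"
      "\<not> contains_p11_22 (P,c)" using x xPc by auto
    have U: "\<Union>P = {1..n}" and ne: "{} \<notin> P" and dj: "disjoint P"
      using part unfolding partition_on_def by auto
    have sing: "\<And>B i j. B \<in> P \<Longrightarrow> i \<in> B \<Longrightarrow> j \<in> B \<Longrightarrow> i = j"
    proof (rule ccontr)
      fix B i j assume B: "B \<in> P" "i \<in> B" "j \<in> B" "i \<noteq> j"
      have ci: "c i \<in> {1,2}" "c j \<in> {1,2}" using cf B U by auto
      have sb: "same_block P i j" "same_block P j i" using B unfolding same_block_def by auto
      show False
      proof (cases "i < j")
        case True then show False using n1 sb ci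
          unfolding contains_p11_11_def contains_p11_12_def contains_p12_11_def by fastforce
      next
        case False then have "j < i" using B by auto
        then show False using n1 sb ci
          unfolding contains_p11_11_def contains_p11_12_def contains_p12_11_def by fastforce
      qed
    qed
    have PS: "P = SP n"
    proof
      show "P \<subseteq> SP n"
      proof
        fix B assume B: "B \<in> P"
        then obtain i where i: "i \<in> B" using ne by (metis all_not_in_conv)
        then have "B = {i}" using sing B by auto
        moreover have "i \<in> {1..n}" using U B i by auto
        ultimately show "B \<in> SP n" unfolding SP_def by auto
      qed
    next
      show "SP n \<subseteq> P"
      proof
        fix B assume "B \<in> SP n"
        then obtain i where i: "i \<in> {1..n}" "B = {i}" unfolding SP_def by auto
        then obtain C where C: "C \<in> P" "i \<in> C" using U by (metis UnionE)
        then have "C = {i}" using sing by auto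
        then show "B \<in> P" using C i by auto
      qed
    qed
    define k where "k = Max ({0} \<union> {i\<in>{1..n}. c i = 2})"
    have fin: "finite ({0} \<union> {i\<in>{1..n}. c i = 2})" by auto
    have kn: "k \<le> n" unfolding k_def using fin by (subst Max_le_iff) auto
    have kin: "k \<in> {0} \<union> {i\<in>{1..n}. c i = 2}" unfolding k_def using fin by (intro Max_in) auto
    have ge: "\<And>i. i \<in> {1..n} \<Longrightarrow> c i = 2 \<Longrightarrow> i \<le> k" unfolding k_def using fin by auto
    have "c = FC n k"
    proof
      fix i
      show "c i = FC n k i"
      proof (cases "i \<in> {1..n}")
        case False then show ?thesis using cf unfolding FC_def by (auto simp: PiE_def extensional_def)
      next
        case True
        have ci: "c i \<in> {1,2}" using cf True by auto
        show ?thesis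
        proof (cases "i \<le> k")
          case le: True
          have "c i = 2"
          proof (rule ccontr)
            assume "c i \<noteq> 2" then have c1: "c i = 1" using ci by auto
            then have "i \<noteq> k" using kin True by auto
            then have ik: "i < k" using le by auto
            then have kk: "k \<in> {1..n}" "c k = 2" using kin by auto
            have "\<not> same_block P i k" using PS same_block_SP ik by fastforce
            then have "contains_p11_22 (P,c)" unfolding contains_p11_22_def
              using ik U True kk c1 by (intro exI[of _ i] exI[of _ k]) auto
            then show False using n1 by auto
          qed
          then show ?thesis using True le unfolding FC_def by auto
        next
          case False
          then have "c i \<noteq> 2" using ge[OF True] by auto
          then show ?thesis using ci True False unfolding FC_def by auto
        qed
      qed
    qed
    then show "x \<in> ?R" using xPc PS kn by auto
  qed
qed

lemma inj: "inj_on (\<lambda>k. (SP n, FC n k)) {0..n}"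
proof (rule inj_onI)
  fix a b assume ab: "a \<in> {0..n}" "b \<in> {0..n}" "(SP n, FC n a) = (SP n, FC n b)"
  then have e: "FC n a = FC n b" by auto
  show "a = b"
  proof (rule ccontr)
    assume "a \<noteq> b"
    then consider "a < b" | "b < a" by linarith
    then show False
    proof cases
      case 1 then have "FC n a b \<noteq> FC n b b" using ab unfolding FC_def by auto
      then show False using e by simp
    next
      case 2 then have "FC n a a \<noteq> FC n b a" using ab unfolding FC_def by auto
      then show False using e by simp
    qed
  qed
qed

theorem mainTheorem18:
  fixes n :: nat
  assumes "n \<ge> 1"
  shows "card {\<sigma> \<in> colored_partitions n.
            \<not> contains_p11_11 \<sigma> \<and> \<not> contains_p11_12 \<sigma> \<and>
            \<not> contains_p12_11 \<sigma> \<and> \<not> contains_p11_22 \<sigma>} = n + 1"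
  unfolding set_eq using card_image[OF inj] by simp

end
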